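(* Consider a $K$-armed bandit ($K\ge 2$) with reward vector $r\in[0,1]^K$ having distinct entries, optimal value $V^*=\max_a r(a)$, and let $\pi_t$ be generated by the discrete EG iteration $\pi_{t+1}(a)=\pi_t(a)e^{\eta f_t(a)}/Z_t$ with a sufficiently small constant learning rate $\eta>0$ (as required for this iteration to converge to the optimal one-hot policy). Then the sub-optimality $\delta_t:=V^*-V_t$, where $V_t:=\pi_t^\top r$, satisfies $\delta_t=O(1/t)$.
   Context: Policies are softmax policies $\pi_\theta(a)=e^{\theta(a)}/\sum_{a'}e^{\theta(a')}$. At iteration $t$, $U_t(a):=r(a)-\pi_t^\top r$, $f_t(a):=U_t(a)\mathbf{1}\{U_t(a)>0\}$, $Z_t:=\sum_{a'}\pi_t(a')e^{\eta f_t(a')}$. *)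

theory Defs
  imports "HOL-Analysis.Analysis" "HOL-Library.Landau_Symbols"
begin

definition softmax :: "('a::finite \<Rightarrow> real) \<Rightarrow> 'a \<Rightarrow> real" where
  "softmax \<theta> a = exp (\<theta> a) / (\<Sum>a'\<in>UNIV. exp (\<theta> a'))"

definition val :: "('a::finite \<Rightarrow> real) \<Rightarrow> ('a \<Rightarrow> real) \<Rightarrow> real" where
  "val r \<pi> = (\<Sum>a\<in>UNIV. \<pi> a * r a)"

definition adv :: "('a::finite \<Rightarrow> real) \<Rightarrow> ('a \<Rightarrow> real) \<Rightarrow> 'a \<Rightarrow> real" where
  "adv r \<pi> a = r a - val r \<pi>"

definition advpos :: "('a::finite \<Rightarrow> real) \<Rightarrow> ('a \<Rightarrow> real) \<Rightarrow> 'a \<Rightarrow> real" where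
  "advpos r \<pi> a = (if adv r \<pi> a > 0 then adv r \<pi> a else 0)"

definition normZ :: "('a::finite \<Rightarrow> real) \<Rightarrow> real \<Rightarrow> ('a \<Rightarrow> real) \<Rightarrow> real" where
  "normZ r \<eta> \<pi> = (\<Sum>a'\<in>UNIV. \<pi> a' * exp (\<eta> * advpos r \<pi> a'))"

definition eg_step :: "('a::finite \<Rightarrow> real) \<Rightarrow> real \<Rightarrow> ('a \<Rightarrow> real) \<Rightarrow> 'a \<Rightarrow> real" where
  "eg_step r \<eta> \<pi> a = \<pi> a * exp (\<eta> * advpos r \<pi> a) / normZ r \<eta> \<pi>"

definition eg_seq :: "('a::finite \<Rightarrow> real) \<Rightarrow> real \<Rightarrow> ('a \<Rightarrow> real) \<Rightarrow> nat \<Rightarrow> 'a \<Rightarrow> real" where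
  "eg_seq r \<eta> \<pi>0 t = (eg_step r \<eta> ^^ t) \<pi>0"

end

theory Submission
  imports Defs
begin

lemma normZ_pos:
  fixes \<pi> :: "'a::finite \<Rightarrow> real"
  assumes "\<forall>a. \<pi> a > 0"
  shows "normZ r \<eta> \<pi> > 0"
  unfolding normZ_def using assms by (intro sum_pos) auto

lemma step_pos:
  fixes \<pi> :: "'a::finite \<Rightarrow> real"
  assumes "\<forall>a. \<pi> a > 0"
  shows "\<forall>a. eg_step r \<eta> \<pi> a > 0"
  using assms normZ_pos[OF assms] unfolding eg_step_def by auto

lemma step_sum:
  fixes \<pi> :: "'a::finite \<Rightarrow> real"
  assumes "\<forall>a. \<pi> a > 0"
  shows "sum (eg_step r \<eta> \<pi>) UNIV = 1"
proof -
  have "sum (eg_step r \<eta> \<pi>) UNIV = (\<Sum>a\<in>UNIV. \<pi> a * exp (\<eta> * advpos r \<pi> a)) / normZ r \<eta> \<pi>"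
    unfolding eg_step_def by (simp add: sum_divide_distrib)
  also have "\<dots> = 1" using normZ_pos[OF assms, of r \<eta>] unfolding normZ_def by simp
  finally show ?thesis .
qed

lemma seq_Suc: "eg_seq r \<eta> \<pi>0 (Suc t) = eg_step r \<eta> (eg_seq r \<eta> \<pi>0 t)"
  unfolding eg_seq_def by simp

lemma seq_inv:
  fixes \<pi>0 :: "'a::finite \<Rightarrow> real"
  assumes "\<forall>a. \<pi>0 a > 0" "sum \<pi>0 UNIV = 1"
  shows "(\<forall>a. eg_seq r \<eta> \<pi>0 t a > 0) \<and> sum (eg_seq r \<eta> \<pi>0 t) UNIV = 1"
proof (induction t)
  case 0 then show ?case using assms by (simp add: eg_seq_def)
next
  case (Suc t) then show ?case using step_pos[of "eg_seq r \<eta> \<pi>0 t" r \<eta>] step_sum[of "eg_seq r \<eta> \<pi>0 t" r \<eta>] by (simp add: seq_Suc)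
qed

lemma softmax_pos: "\<forall>a. softmax (\<theta>::'a::finite \<Rightarrow> real) a > 0"
  unfolding softmax_def by (auto intro!: divide_pos_pos sum_pos)

lemma softmax_sum: "sum (softmax (\<theta>::'a::finite \<Rightarrow> real)) UNIV = 1"
proof -
  have "(\<Sum>a'\<in>UNIV. exp (\<theta> a')) > 0" by (auto intro!: sum_pos)
  then show ?thesis unfolding softmax_def by (simp add: sum_divide_distrib[symmetric])
qed

definition Sr :: "'a \<Rightarrow> ('a::finite \<Rightarrow> real) \<Rightarrow> real" where
  "Sr s \<pi> = (\<Sum>a\<in>UNIV - {s}. \<pi> a / \<pi> s)"

lemma delta_lower:
  fixes \<pi> :: "'a::finite \<Rightarrow> real"
  assumes "\<forall>a. \<pi> a > 0" "sum \<pi> UNIV = 1"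
    and "\<forall>a. a \<noteq> s \<longrightarrow> r a \<le> r s - D"
  shows "r s - val r \<pi> \<ge> D * (1 - \<pi> s)" and "1 - \<pi> s = sum \<pi> (UNIV - {s})"
proof -
  have sp: "sum \<pi> UNIV = \<pi> s + sum \<pi> (UNIV - {s})" by (simp add: sum.remove)
  then show "1 - \<pi> s = sum \<pi> (UNIV - {s})" using assms by simp
  have "r s - val r \<pi> = (\<Sum>a\<in>UNIV. \<pi> a * (r s - r a))"
    unfolding val_def using assms(2) by (simp add: algebra_simps sum_subtractf sum_distrib_right[symmetric])
  also have "\<dots> = (\<Sum>a\<in>UNIV - {s}. \<pi> a * (r s - r a))" by (simp add: sum.remove[of UNIV s])
  also have "\<dots> \<ge> (\<Sum>a\<in>UNIV - {s}. \<pi> a * D)"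
    using assms by (intro sum_mono mult_left_mono) (auto simp: less_imp_le)
  moreover have "1 - \<pi> s = sum \<pi> (UNIV - {s})" using sp assms(2) by simp
  ultimately show "r s - val r \<pi> \<ge> D * (1 - \<pi> s)"
    by (simp add: sum_distrib_left[symmetric] mult.commute)
qed


lemma S_eq:
  fixes \<pi> :: "'a::finite \<Rightarrow> real"
  assumes "\<forall>a. \<pi> a > 0" "sum \<pi> UNIV = 1"
  shows "Sr s \<pi> = (1 - \<pi> s) / \<pi> s"
proof -
  have sp: "sum \<pi> UNIV = \<pi> s + sum \<pi> (UNIV - {s})" by (simp add: sum.remove)
  show ?thesis unfolding Sr_def using sp assms by (simp add: sum_divide_distrib[symmetric])
qed

lemma S_pos:
  fixes \<pi> :: "'a::finite \<Rightarrow> real"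
  assumes "\<forall>a. \<pi> a > 0" "UNIV - {s} \<noteq> {}"
  shows "Sr s \<pi> > 0"
  unfolding Sr_def using assms by (intro sum_pos) auto

lemma contraction:
  fixes \<pi> :: "'a::finite \<Rightarrow> real"
  assumes pos: "\<forall>a. \<pi> a > 0" and s1: "sum \<pi> UNIV = 1"
    and gap: "\<forall>a. a \<noteq> s \<longrightarrow> r a \<le> r s - D" and D: "D > 0" and eta: "\<eta> \<ge> 0"
    and ne: "UNIV - {s} \<noteq> {}"
  shows "Sr s (eg_step r \<eta> \<pi>) \<le> Sr s \<pi> * exp (- \<eta> * min (r s - val r \<pi>) D)"
proof -
  define \<delta> where "\<delta> = r s - val r \<pi>"
  define m where "m = min \<delta> D"
  have "1 - \<pi> s > 0" using delta_lower(2)[OF pos s1 gap] pos ne by (auto intro!: sum_pos)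
  then have dpos: "\<delta> > 0" using delta_lower(1)[OF pos s1 gap] D unfolding \<delta>_def
    by (smt (verit) mult_pos_pos)
  have fs: "advpos r \<pi> s = \<delta>" using dpos unfolding advpos_def adv_def \<delta>_def by simp
  have Zp: "normZ r \<eta> \<pi> > 0" using normZ_pos[OF pos] .
  have "Sr s (eg_step r \<eta> \<pi>) = (\<Sum>a\<in>UNIV - {s}. \<pi> a / \<pi> s * exp (\<eta> * (advpos r \<pi> a - \<delta>)))"
    unfolding Sr_def
  proof (rule sum.cong)
    fix a assume "a \<in> UNIV - {s}"
    show "eg_step r \<eta> \<pi> a / eg_step r \<eta> \<pi> s = \<pi> a / \<pi> s * exp (\<eta> * (advpos r \<pi> a - \<delta>))"
      unfolding eg_step_def fs using Zp pos
      by (simp add: right_diff_distrib exp_diff field_simps)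
  qed simp
  also have "\<dots> \<le> (\<Sum>a\<in>UNIV - {s}. \<pi> a / \<pi> s * exp (- \<eta> * m))"
  proof (rule sum_mono)
    fix a assume a: "a \<in> UNIV - {s}"
    have "advpos r \<pi> a - \<delta> \<le> - m"
    proof (cases "adv r \<pi> a > 0")
      case True
      then have "advpos r \<pi> a - \<delta> = r a - r s" unfolding advpos_def adv_def \<delta>_def by simp
      then show ?thesis using gap a unfolding m_def by auto
    next
      case False
      then show ?thesis unfolding advpos_def m_def by auto
    qed
    then have "\<eta> * (advpos r \<pi> a - \<delta>) \<le> \<eta> * (- m)"
      using eta by (rule mult_left_mono)
    then have "exp (\<eta> * (advpos r \<pi> a - \<delta>)) \<le> exp (- \<eta> * m)"
      by simp
    then show "\<pi> a / \<pi> s * exp (\<eta> * (advpos r \<pi> a - \<delta>)) \<le> \<pi> a / \<pi> s * exp (- \<eta> * m)"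
      using pos by (intro mult_left_mono) (auto simp: less_imp_le)
  qed
  also have "\<dots> = Sr s \<pi> * exp (- \<eta> * m)" unfolding Sr_def by (simp add: sum_distrib_right)
  finally show ?thesis unfolding m_def \<delta>_def .
qed

lemma delta_upper:
  fixes \<pi> :: "'a::finite \<Rightarrow> real"
  assumes "\<forall>a. \<pi> a > 0" "sum \<pi> UNIV = 1"
    and "\<forall>a. 0 \<le> r a \<and> r a \<le> 1"
  shows "r s - val r \<pi> \<le> 1 - \<pi> s"
proof -
  have sp: "sum \<pi> UNIV = \<pi> s + sum \<pi> (UNIV - {s})" by (simp add: sum.remove)
  have "r s - val r \<pi> = (\<Sum>a\<in>UNIV. \<pi> a * (r s - r a))"
    unfolding val_def using assms(2) by (simp add: algebra_simps sum_subtractf sum_distrib_right[symmetric])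
  also have "\<dots> = (\<Sum>a\<in>UNIV - {s}. \<pi> a * (r s - r a))" by (simp add: sum.remove[of UNIV s])
  also have "\<dots> \<le> (\<Sum>a\<in>UNIV - {s}. \<pi> a)"
  proof (rule sum_mono)
    fix a
    have "r s - r a \<le> 1" using assms(3) by (smt (verit))
    then show "\<pi> a * (r s - r a) \<le> \<pi> a" using assms(1)
      by (metis less_imp_le mult.right_neutral mult_left_mono)
  qed
  finally show ?thesis using sp assms(2) by simp
qed

theorem corollary1:
  fixes r :: "'a::finite \<Rightarrow> real" and \<theta>0 :: "'a \<Rightarrow> real"
  assumes "CARD('a) \<ge> 2"
    and "\<forall>a. 0 \<le> r a \<and> r a \<le> 1"
    and "inj r"
  shows "\<exists>\<eta>0>0. \<forall>\<eta>. 0 < \<eta> \<and> \<eta> \<le> \<eta>0 \<longrightarrow>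
     (\<lambda>t. Max (range r) - val r (eg_seq r \<eta> (softmax \<theta>0) t)) \<in> O(\<lambda>t. 1 / real t)"
proof -
  have "Max (range r) \<in> range r" by (rule Max_in) auto
  then obtain s where s: "Max (range r) = r s" by (metis imageE)
  have ne: "UNIV - {s} \<noteq> {}"
  proof
    assume "UNIV - {s} = {}"
    then have "(UNIV::'a set) = {s}" by auto
    then have "CARD('a) = card {s}" by (rule arg_cong)
    then have "CARD('a) = 1" by simp
    then show False using assms(1) by simp
  qed
  define D where "D = r s - Max (r ` (UNIV - {s}))"
  have gap: "\<forall>a. a \<noteq> s \<longrightarrow> r a \<le> r s - D"
    unfolding D_def by (auto intro: Max_ge)
  have Dpos: "D > 0"
  proof -
    obtain b where b: "b \<in> UNIV - {s}" "Max (r ` (UNIV - {s})) = r b"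
    proof -
      have "Max (r ` (UNIV - {s})) \<in> r ` (UNIV - {s})" using ne by (intro Max_in) auto
      then show ?thesis using that by blast
    qed
    have "r b \<le> r s" using s Max_ge[of "range r" "r b"] by simp
    moreover have "r b \<noteq> r s" using b assms(3) by (auto dest: injD)
    ultimately show ?thesis unfolding D_def using b by simp
  qed
  show ?thesis
  proof (intro exI[of _ 1] conjI allI impI)
    fix \<eta> :: real assume "0 < \<eta> \<and> \<eta> \<le> 1"
    then have eta: "\<eta> > 0" by simp
    define \<pi> where "\<pi> t = eg_seq r \<eta> (softmax \<theta>0) t" for t
    have inv: "(\<forall>a. \<pi> t a > 0) \<and> sum (\<pi> t) UNIV = 1" for t
      unfolding \<pi>_def by (rule seq_inv[OF softmax_pos softmax_sum])
    have pos: "\<forall>a. \<pi> t a > 0" and s1: "sum (\<pi> t) UNIV = 1" for t using inv by auto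
    define S where "S t = Sr s (\<pi> t)" for t
    have Spos: "S t > 0" for t unfolding S_def using S_pos[OF pos ne] .
    define c where "c = D / (1 + S 0)"
    define k where "k = \<eta> * c"
    have cpos: "c > 0" unfolding c_def using Dpos Spos[of 0] by simp
    have kpos: "k > 0" unfolding k_def using cpos eta by simp
    have p_eq: "\<pi> t s = 1 / (1 + S t)" "1 - \<pi> t s = S t / (1 + S t)" for t
    proof -
      have "S t = (1 - \<pi> t s) / \<pi> t s" unfolding S_def by (rule S_eq[OF pos s1])
      moreover have "\<pi> t s \<noteq> 0" using pos[of t] by (metis less_irrefl)
      ultimately have "S t * \<pi> t s = 1 - \<pi> t s" by simp
      then show "\<pi> t s = 1 / (1 + S t)" "1 - \<pi> t s = S t / (1 + S t)"
        using Spos[of t] by (simp_all add: field_simps)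
    qed
    have step: "S (Suc t) \<le> S t / (1 + k * S t)" if le: "S t \<le> S 0" for t
    proof -
      define \<delta> where "\<delta> = r s - val r (\<pi> t)"
      have "\<delta> \<ge> D * (S t / (1 + S t))" unfolding \<delta>_def
        using delta_lower(1)[OF pos s1 gap] p_eq(2)[of t] by metis
      moreover have "D * (S t / (1 + S t)) \<ge> c * S t" unfolding c_def using le Dpos Spos[of t]
        by (simp add: field_simps mult_left_mono)
      ultimately have d1: "\<delta> \<ge> c * S t" by linarith
      have "D * S t \<le> D * (1 + S 0)" using le Dpos by (intro mult_left_mono) auto
      then have "D * S t / (1 + S 0) \<le> D" using Spos[of 0] by (subst pos_divide_le_eq) (auto simp: mult.commute)
      then have d2: "D \<ge> c * S t" unfolding c_def by simp
      have "min \<delta> D \<ge> c * S t" using d1 d2 by simp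
      then have "\<eta> * min \<delta> D \<ge> k * S t" unfolding k_def using eta
        by (metis mult.assoc mult_left_mono less_imp_le)
      then have "exp (- \<eta> * min \<delta> D) \<le> exp (- (k * S t))" by simp
      also have "\<dots> \<le> 1 / (1 + k * S t)"
      proof -
        have "1 + k * S t \<le> exp (k * S t)" by (rule exp_ge_add_one_self)
        moreover have "1 + k * S t > 0" using kpos Spos[of t] by (smt (verit) mult_pos_pos)
        ultimately show ?thesis by (simp add: exp_minus field_simps)
      qed
      finally have e: "exp (- \<eta> * min \<delta> D) \<le> 1 / (1 + k * S t)" .
      have "S (Suc t) \<le> S t * exp (- \<eta> * min \<delta> D)"
        unfolding S_def \<delta>_def \<pi>_def seq_Suc
        using contraction[OF pos[unfolded \<pi>_def] s1[unfolded \<pi>_def] gap Dpos _ ne, of \<eta>] eta by simp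
      also have "\<dots> \<le> S t * (1 / (1 + k * S t))"
        using e Spos[of t] by (intro mult_left_mono) auto
      finally show ?thesis by simp
    qed
    have ind: "S t \<le> S 0 \<and> k * real t \<le> 1 / S t" for t
    proof (induction t)
      case 0 then show ?case using Spos[of 0] by simp
    next
      case (Suc t)
      then have st: "S (Suc t) \<le> S t / (1 + k * S t)" using step by blast
      have g: "1 + k * S t > 0" using kpos Spos[of t] by (smt (verit) mult_pos_pos)
      have "S t / (1 + k * S t) \<le> S t" using g Spos[of t] kpos
        by (simp add: field_simps mult_pos_pos less_imp_le)
      then have A: "S (Suc t) \<le> S 0" using st Suc by linarith
      have "1 / (S t / (1 + k * S t)) \<le> 1 / S (Suc t)"
        by (rule divide_left_mono[OF st]) (use Spos[of t] Spos[of "Suc t"] g in auto)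
      then have "1 / S (Suc t) \<ge> (1 + k * S t) / S t" by simp
      also have "(1 + k * S t) / S t = 1 / S t + k" using Spos[of t] by (simp add: field_simps)
      finally have "1 / S (Suc t) \<ge> 1 / S t + k" .
      then show ?case using A Suc by (simp add: algebra_simps)
    qed
    have bound: "\<bar>Max (range r) - val r (\<pi> t)\<bar> \<le> (1 / k) * \<bar>1 / real t\<bar>" if t: "t \<ge> 1" for t
    proof -
      have "sum (\<pi> t) (UNIV - {s}) \<ge> 0" using pos[of t] by (simp add: sum_nonneg less_imp_le)
      then have "D * (1 - \<pi> t s) \<ge> 0" using delta_lower(2)[OF pos s1 gap, of t] Dpos by simp
      then have lo: "r s - val r (\<pi> t) \<ge> 0"
        using delta_lower(1)[OF pos s1 gap, of t] by linarith
      have up: "r s - val r (\<pi> t) \<le> S t"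
      proof -
        have "S t / (1 + S t) \<le> S t" using Spos[of t] by (simp add: divide_le_eq algebra_simps)
        then show ?thesis using delta_upper[OF pos[of t] s1[of t] assms(2), of s] p_eq(2)[of t] by linarith
      qed
      have "k * real t * S t \<le> 1 / S t * S t"
        using ind[of t] Spos[of t] by (intro mult_right_mono) auto
      then have kk: "k * real t * S t \<le> 1" using Spos[of t] by simp
      have ktp: "k * real t > 0" using kpos t by simp
      have "S t \<le> 1 / (k * real t)" using kk ktp by (simp add: le_divide_eq mult.commute)
      then show ?thesis using lo up s t by simp
    qed
    show "(\<lambda>t. Max (range r) - val r (eg_seq r \<eta> (softmax \<theta>0) t)) \<in> O(\<lambda>t. 1 / real t)"
    proof (rule bigoI[of _ "1 / k"])
      show "\<forall>\<^sub>F t in at_top. norm (Max (range r) - val r (eg_seq r \<eta> (softmax \<theta>0) t)) \<le> 1 / k * norm (1 / real t)"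
        using eventually_ge_at_top[of "1::nat"]
        by eventually_elim (use bound in \<open>auto simp: \<pi>_def\<close>)
    qed
  qed simp
qed

end
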